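(* Let $f_1,\dots,f_m\in\mathbb{K}[x_1,\dots,x_n]$, with $\mathbb{K}\subset\mathbb{R}$ a field, satisfy the regularity hypothesis below, and let $\mathcal{M}\subset\mathbb{R}^n$ be a finite set such that $\mathcal{M}\cap\overline C\ne\emptyset$ for every connected component $C$ of the realization of each feasible sign condition over $f_1,\dots,f_m$. Then the set of all feasible sign conditions over $f_1,\dots,f_m$ equals $\bigcup_{\sigma\in\mathcal{L}(\mathcal{M})}P_\sigma$, where $\mathcal{L}(\mathcal{M})$ is the set of sign conditions satisfied by the elements of $\mathcal{M}$ and $P_\sigma\subset\{<,=,>\}^m$ is the set of elements obtained from $\sigma$ by replacing some (possibly none) of its ``$=$'' coordinates with ``$<$'' or ``$>$''.
   Context: Regularity hypothesis: for every $x\in\mathbb{C}^n$ and every $\{i_1,\dots,i_s\}\subset\{1,\dots,m\}$, if $f_{i_1}(x)=\dots=f_{i_s}(x)=0$ then $\nabla f_{i_1}(x),\dots,\nabla f_{i_s}(x)$ are linearly independent. A sign condition is $\sigma\in\{<,=,>\}^m$; its realization is $\{x\in\mathbb{R}^n:f_i(x)\sigma_i0,\ 1\le i\le m\}$; it is feasible if the realization is nonempty. A point $z$ satisfies $\sigma$ if $f_i(z)\sigma_i0$ for all $i$. *)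

theory Defs
  imports "HOL-Analysis.Analysis" "HOL-Library.Poly_Mapping"
begin

text \<open>Multivariate polynomials in the variables indexed by the finite type 'n
  (so n = CARD('n)), with real coefficients: finitely supported maps from
  exponent vectors to coefficients.\<close>
type_synonym 'n mpoly = "('n \<Rightarrow> nat) \<Rightarrow>\<^sub>0 real"

definition mpoly_eval :: "'n::finite mpoly \<Rightarrow> 'a::real_field ^ 'n \<Rightarrow> 'a" where
  "mpoly_eval p x = (\<Sum>\<alpha>\<in>Poly_Mapping.keys p. of_real (Poly_Mapping.lookup p \<alpha>) * (\<Prod>j\<in>UNIV. (x $ j) ^ \<alpha> j))"

definition mpoly_grad :: "'n::finite mpoly \<Rightarrow> 'a::real_field ^ 'n \<Rightarrow> 'a ^ 'n" where
  "mpoly_grad p x = (\<chi> i. \<Sum>\<alpha>\<in>Poly_Mapping.keys p. of_real (Poly_Mapping.lookup p \<alpha>) * of_nat (\<alpha> i) *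
      (\<Prod>j\<in>UNIV. (x $ j) ^ (if j = i then \<alpha> j - 1 else \<alpha> j)))"

definition lin_indep_family :: "('i \<Rightarrow> 'a::field ^ 'n) \<Rightarrow> 'i set \<Rightarrow> bool" where
  "lin_indep_family v S \<longleftrightarrow>
     (\<forall>c. (\<Sum>i\<in>S. c i *s v i) = 0 \<longrightarrow> (\<forall>i\<in>S. c i = 0))"

definition subfield_of_reals :: "real set \<Rightarrow> bool" where
  "subfield_of_reals K \<longleftrightarrow> 0 \<in> K \<and> 1 \<in> K \<and>
     (\<forall>a\<in>K. \<forall>b\<in>K. a + b \<in> K \<and> a * b \<in> K) \<and>
     (\<forall>a\<in>K. - a \<in> K) \<and> (\<forall>a\<in>K. a \<noteq> 0 \<longrightarrow> inverse a \<in> K)"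

definition regular :: "nat \<Rightarrow> (nat \<Rightarrow> 'n::finite mpoly) \<Rightarrow> bool" where
  "regular m f \<longleftrightarrow>
     (\<forall>x :: complex ^ 'n. \<forall>S \<subseteq> {1..m}.
        (\<forall>i\<in>S. mpoly_eval (f i) x = 0) \<longrightarrow> lin_indep_family (\<lambda>i. mpoly_grad (f i) x) S)"

datatype sign_rel = SLt | SEq | SGt

fun holds :: "sign_rel \<Rightarrow> real \<Rightarrow> bool" where
  "holds SLt a = (a < 0)"
| "holds SEq a = (a = 0)"
| "holds SGt a = (a > 0)"

definition sign_conds :: "nat \<Rightarrow> (nat \<Rightarrow> sign_rel) set" where
  "sign_conds m = {1..m} \<rightarrow>\<^sub>E (UNIV :: sign_rel set)"

definition satisfies :: "nat \<Rightarrow> (nat \<Rightarrow> 'n::finite mpoly) \<Rightarrow> (nat \<Rightarrow> sign_rel) \<Rightarrow> real ^ 'n \<Rightarrow> bool" where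
  "satisfies m f \<sigma> z \<longleftrightarrow> (\<forall>i\<in>{1..m}. holds (\<sigma> i) (mpoly_eval (f i) z))"

definition realization :: "nat \<Rightarrow> (nat \<Rightarrow> 'n::finite mpoly) \<Rightarrow> (nat \<Rightarrow> sign_rel) \<Rightarrow> (real ^ 'n) set" where
  "realization m f \<sigma> = {x. satisfies m f \<sigma> x}"

definition feasible :: "nat \<Rightarrow> (nat \<Rightarrow> 'n::finite mpoly) \<Rightarrow> (nat \<Rightarrow> sign_rel) \<Rightarrow> bool" where
  "feasible m f \<sigma> \<longleftrightarrow> realization m f \<sigma> \<noteq> {}"

definition L_of :: "nat \<Rightarrow> (nat \<Rightarrow> 'n::finite mpoly) \<Rightarrow> (real ^ 'n) set \<Rightarrow> (nat \<Rightarrow> sign_rel) set" where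
  "L_of m f M = {\<sigma> \<in> sign_conds m. \<exists>z\<in>M. satisfies m f \<sigma> z}"

definition P_of :: "nat \<Rightarrow> (nat \<Rightarrow> sign_rel) \<Rightarrow> (nat \<Rightarrow> sign_rel) set" where
  "P_of m \<sigma> = {\<tau> \<in> sign_conds m. \<forall>i\<in>{1..m}. \<sigma> i \<noteq> SEq \<longrightarrow> \<tau> i = \<sigma> i}"

end

theory Submission
  imports Defs
begin


lemma mono_deriv:
  fixes x :: "real^'n::finite"
  shows "((\<lambda>x. \<Prod>j\<in>UNIV. (x$j)^\<alpha> j) has_derivative
     (\<lambda>h. \<Sum>i\<in>UNIV. of_nat (\<alpha> i) * h$i * (\<Prod>j\<in>UNIV. (x$j)^(if j=i then \<alpha> j - 1 else \<alpha> j)))) (at x)"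
proof -
  have d: "((\<lambda>x. (x$j)^\<alpha> j) has_derivative (\<lambda>y. of_nat (\<alpha> j) * y$j * (x$j)^(\<alpha> j - 1))) (at x)" for j
    using has_derivative_power[OF bounded_linear_imp_has_derivative[OF bounded_linear_vec_nth[of j]], where n="\<alpha> j" and x=x]
    by simp
  have eq: "(\<Prod>j\<in>UNIV. (x$j)^(if j=i then \<alpha> j - 1 else \<alpha> j)) = (x$i)^(\<alpha> i - 1) * (\<Prod>j\<in>UNIV-{i}. (x$j)^\<alpha> j)" for i
    by (subst prod.remove[of UNIV i]) (auto intro!: prod.cong)
  show ?thesis
    using has_derivative_prod[of UNIV "\<lambda>j x. (x$j)^\<alpha> j", OF d]
    by (simp add: eq mult_ac)
qed

lemma mpoly_deriv:
  fixes x :: "real^'n::finite"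
  shows "(mpoly_eval p has_derivative (\<lambda>h. mpoly_grad p x \<bullet> h)) (at x)"
proof -
  have "((\<lambda>x. \<Sum>\<alpha>\<in>Poly_Mapping.keys p. Poly_Mapping.lookup p \<alpha> * (\<Prod>j\<in>UNIV. (x $ j) ^ \<alpha> j)) has_derivative
     (\<lambda>h. \<Sum>\<alpha>\<in>Poly_Mapping.keys p. Poly_Mapping.lookup p \<alpha> * (\<Sum>i\<in>UNIV. of_nat (\<alpha> i) * h$i * (\<Prod>j\<in>UNIV. (x$j)^(if j=i then \<alpha> j - 1 else \<alpha> j))))) (at x)"
    by (intro has_derivative_sum has_derivative_mult_right mono_deriv)
  moreover have "(\<lambda>h. \<Sum>\<alpha>\<in>Poly_Mapping.keys p. Poly_Mapping.lookup p \<alpha> * (\<Sum>i\<in>UNIV. of_nat (\<alpha> i) * h$i * (\<Prod>j\<in>UNIV. (x$j)^(if j=i then \<alpha> j - 1 else \<alpha> j))))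
      = (\<lambda>h. mpoly_grad p x \<bullet> h)"
    by (auto simp: mpoly_grad_def inner_vec_def sum_distrib_left sum_distrib_right mult_ac intro!: ext sum.swap)
  ultimately show ?thesis by (simp add: mpoly_eval_def[abs_def])
qed

lemma mpoly_cont: "continuous_on A (mpoly_eval (p::'n::finite mpoly) :: real^'n \<Rightarrow> real)"
  unfolding mpoly_eval_def by (intro continuous_intros)


lemma mpoly_cont'[continuous_intros]:
  "continuous_on A g \<Longrightarrow> continuous_on A (\<lambda>x. mpoly_eval (p::'n::finite mpoly) (g x) :: real)"
  unfolding mpoly_eval_def by (intro continuous_intros)

lemma eval_of_real:
  "mpoly_eval p (\<chi> j. complex_of_real (z$j)) = complex_of_real (mpoly_eval p z)"
  by (simp add: mpoly_eval_def)

lemma grad_of_real: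
  "mpoly_grad p (\<chi> j. complex_of_real (z$j)) = (\<chi> i. complex_of_real (mpoly_grad p z $ i))"
  by (simp add: mpoly_grad_def)

lemma real_indep:
  fixes f :: "nat \<Rightarrow> 'n::finite mpoly" and z :: "real^'n"
  assumes "regular m f" "S \<subseteq> {1..m}" "\<forall>i\<in>S. mpoly_eval (f i) z = 0"
  shows "lin_indep_family (\<lambda>i. mpoly_grad (f i) z) S"
proof -
  let ?zc = "(\<chi> j. complex_of_real (z$j))"
  have ci: "lin_indep_family (\<lambda>i. mpoly_grad (f i) ?zc) S"
    using assms unfolding regular_def by (auto simp: eval_of_real)
  show ?thesis unfolding lin_indep_family_def
  proof (intro allI impI)
    fix c assume h: "(\<Sum>i\<in>S. c i *s mpoly_grad (f i) z) = 0"
    have "(\<Sum>i\<in>S. complex_of_real (c i) *s mpoly_grad (f i) ?zc) = 0"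
    proof (subst vec_eq_iff, intro allI)
      fix k
      have "(\<Sum>i\<in>S. c i *s mpoly_grad (f i) z) $ k = 0" using h by simp
      then have "complex_of_real (\<Sum>i\<in>S. c i * mpoly_grad (f i) z $ k) = 0" by simp
      then show "(\<Sum>i\<in>S. complex_of_real (c i) *s mpoly_grad (f i) ?zc) $ k = 0 $ k"
        by (simp add: grad_of_real)
    qed
    then have "\<forall>i\<in>S. complex_of_real (c i) = 0"
      using ci[unfolded lin_indep_family_def, THEN spec[of _ "\<lambda>i. complex_of_real (c i)"]] by blast
    then show "\<forall>i\<in>S. c i = 0" by simp
  qed
qed



lemma closure_sign:
  fixes f :: "nat \<Rightarrow> 'n::finite mpoly"
  assumes "z \<in> closure (realization m f \<sigma>)" "i \<in> {1..m}"
  shows "(\<sigma> i = SEq \<longrightarrow> mpoly_eval (f i) z = 0) \<and> (\<sigma> i = SLt \<longrightarrow> mpoly_eval (f i) z \<le> 0)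
       \<and> (\<sigma> i = SGt \<longrightarrow> mpoly_eval (f i) z \<ge> 0)"
proof -
  let ?g = "mpoly_eval (f i) :: real^'n \<Rightarrow> real"
  have c: "continuous_on UNIV ?g" by (rule mpoly_cont)
  have R: "realization m f \<sigma> \<subseteq> {x. holds (\<sigma> i) (?g x)}"
    using assms(2) by (auto simp: realization_def satisfies_def)
  have cl1: "closed {x. ?g x = 0}" by (rule closed_Collect_eq[OF c continuous_on_const, simplified])
  have cl2: "closed {x. ?g x \<le> 0}" by (rule closed_Collect_le[OF c continuous_on_const, simplified])
  have cl3: "closed {x. 0 \<le> ?g x}" by (rule closed_Collect_le[OF continuous_on_const c, simplified])
  have "\<sigma> i = SEq \<Longrightarrow> closure (realization m f \<sigma>) \<subseteq> {x. ?g x = 0}"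
    by (rule closure_minimal[OF _ cl1]) (use R in force)
  moreover have "\<sigma> i = SLt \<Longrightarrow> closure (realization m f \<sigma>) \<subseteq> {x. ?g x \<le> 0}"
    by (rule closure_minimal[OF _ cl2]) (use R in force)
  moreover have "\<sigma> i = SGt \<Longrightarrow> closure (realization m f \<sigma>) \<subseteq> {x. 0 \<le> ?g x}"
    by (rule closure_minimal[OF _ cl3]) (use R in force)
  ultimately show ?thesis using assms(1) by blast
qed

lemma sub_dir:
  fixes f :: "nat \<Rightarrow> 'n::finite mpoly"
  assumes "\<sigma> \<in> sign_conds m" "feasible m f \<sigma>"
    "\<forall>C\<in>components (realization m f \<sigma>). M \<inter> closure C \<noteq> {}"
  shows "\<exists>\<tau>\<in>L_of m f M. \<sigma> \<in> P_of m \<tau>"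
proof -
  let ?R = "realization m f \<sigma>"
  obtain x where x: "x \<in> ?R" using assms(2) unfolding feasible_def by blast
  have "connected_component_set ?R x \<in> components ?R" using x by (simp add: components_def)
  then obtain z where z: "z \<in> M" "z \<in> closure (connected_component_set ?R x)" using assms(3) by blast
  have zR: "z \<in> closure ?R" using z(2) closure_mono[OF connected_component_subset] by blast
  define \<tau> where "\<tau> = (\<lambda>k. if k \<in> {1..m} then (if mpoly_eval (f k) z < (0::real) then SLt
      else if mpoly_eval (f k) z = 0 then SEq else SGt) else undefined)"
  have ts: "\<tau> \<in> sign_conds m" unfolding sign_conds_def \<tau>_def by auto
  have "satisfies m f \<tau> z" unfolding satisfies_def \<tau>_def by auto
  then have "\<tau> \<in> L_of m f M" using ts z(1) unfolding L_of_def by blast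
  moreover have "\<sigma> \<in> P_of m \<tau>"
    unfolding P_of_def
  proof (intro CollectI conjI ballI impI)
    show "\<sigma> \<in> sign_conds m" by fact
    fix i assume i: "i \<in> {1..m}" "\<tau> i \<noteq> SEq"
    note cs = closure_sign[OF zR i(1)]
    show "\<sigma> i = \<tau> i"
      using i cs by (cases "\<sigma> i") (auto simp: \<tau>_def)
  qed
  ultimately show ?thesis by blast
qed



lemma dnth[derivative_intros]: "((\<lambda>t. t$k) has_derivative (\<lambda>h. h$k)) F"
  by (rule bounded_linear_imp_has_derivative) (rule bounded_linear_vec_nth)

lemma sup_dir:
  fixes f :: "nat \<Rightarrow> 'n::finite mpoly" and z :: "real^'n"
  assumes reg: "regular m f" and sz: "satisfies m f \<sigma> z" and tP: "\<tau> \<in> P_of m \<sigma>"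
  shows "\<exists>x. satisfies m f \<tau> x"
proof -
  define S where "S = {i\<in>{1..m}. \<sigma> i = SEq}"
  define g where "g i = (mpoly_grad (f i) z :: real^'n)" for i
  have Ssub: "S \<subseteq> {1..m}" and finS: "finite S" by (auto simp: S_def)
  have z0': "holds (\<sigma> i) (mpoly_eval (f i) z) \<and> \<sigma> i = SEq" if "i\<in>S" for i
    using sz that unfolding satisfies_def S_def by blast
  have z0: "\<forall>i\<in>S. mpoly_eval (f i) z = 0" using z0' by fastforce
  have ind: "lin_indep_family g S" using real_indep[OF reg Ssub z0]
    by (metis (no_types, lifting) g_def ext)
  have indR: "\<forall>i\<in>S. c i = 0" if "(\<Sum>i\<in>S. c i *\<^sub>R g i) = 0" for c
    using ind that by (simp add: lin_indep_family_def scalar_mult_eq_scaleR)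
  have injg: "inj_on g S"
  proof (rule inj_onI)
    fix i j assume ij: "i\<in>S" "j\<in>S" "g i = g j"
    show "i = j"
    proof (rule ccontr)
      assume ne: "i \<noteq> j"
      define c where "c k = (if k = i then 1 else if k = j then -1 else (0::real))" for k
      have "(\<Sum>k\<in>S. c k *\<^sub>R g k) = (\<Sum>k\<in>S. (if k = i then g i else 0) - (if k = j then g j else 0))"
        by (rule sum.cong) (auto simp: c_def ne)
      also have "\<dots> = g i - g j" using ij finS by (simp add: sum_subtractf)
      also have "\<dots> = 0" using ij by simp
      finally have "\<forall>k\<in>S. c k = 0" using indR by blast
      then show False using ij by (auto simp: c_def)
    qed
  qed
  have "independent (g ` S)"
  proof (rule independent_if_scalars_zero)
    show "finite (g`S)" using finS by simp
    fix c x assume h: "(\<Sum>x\<in>g`S. c x *\<^sub>R x) = 0" "x \<in> g`S"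
    have "(\<Sum>i\<in>S. c (g i) *\<^sub>R g i) = 0" using h(1) sum.reindex[OF injg, of "\<lambda>x. c x *\<^sub>R x"] by simp
    then show "c x = 0" using indR[of "\<lambda>i. c (g i)"] h(2) by auto
  qed
  then have "card (g`S) \<le> DIM(real^'n)" using independent_bound by blast
  then have cS: "card S \<le> card (UNIV::'n set)" using card_image[OF injg] by simp
  obtain \<phi> :: "nat \<Rightarrow> 'n" where phi: "inj_on \<phi> S"
    using card_le_inj[OF finS finite_class.finite_UNIV cS] by blast
  define L where "L h = (\<Sum>j\<in>S. (h$(\<phi> j)) *\<^sub>R g j)" for h :: "real^'n"
  define xm where "xm t = z + L t" for t
  define F where "F t = (\<Sum>i\<in>S. mpoly_eval (f i) (xm t) *\<^sub>R axis (\<phi> i) (1::real))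
     + (\<Sum>k\<in>-(\<phi>`S). (t$k) *\<^sub>R axis k 1)" for t :: "real^'n"
  define D where "D h = (\<Sum>i\<in>S. (g i \<bullet> L h) *\<^sub>R axis (\<phi> i) (1::real))
     + (\<Sum>k\<in>-(\<phi>`S). (h$k) *\<^sub>R axis k 1)" for h :: "real^'n"
  have comp1: "(\<Sum>i\<in>S. a i *\<^sub>R axis (\<phi> i) (1::real)) $ (\<phi> i0) = a i0" if "i0 \<in> S" for a i0
  proof -
    have "(\<Sum>i\<in>S. a i *\<^sub>R axis (\<phi> i) (1::real)) $ (\<phi> i0) = (\<Sum>i\<in>S. if i = i0 then a i else 0)"
      by (simp, rule sum.cong) (use phi that in \<open>auto simp: axis_def inj_on_eq_iff\<close>)
    then show ?thesis using that finS by simp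
  qed
  have comp2: "(\<Sum>i\<in>S. a i *\<^sub>R axis (\<phi> i) (1::real)) $ k = 0" if "k \<notin> \<phi>`S" for a k
    using that by (force simp: axis_def intro!: sum.neutral)
  have comp3: "(\<Sum>k'\<in>-(\<phi>`S). b k' *\<^sub>R axis k' (1::real)) $ k = b k" if "k \<notin> \<phi>`S" for b k
  proof -
    have "(\<Sum>k'\<in>-(\<phi>`S). b k' *\<^sub>R axis k' (1::real)) $ k = (\<Sum>k'\<in>-(\<phi>`S). if k' = k then b k' else 0)"
      unfolding sum_component by (rule sum.cong) (auto simp: axis_def)
    then show ?thesis using that by simp
  qed
  have comp4: "(\<Sum>k'\<in>-(\<phi>`S). b k' *\<^sub>R axis k' (1::real)) $ k = 0" if "k \<in> \<phi>`S" for b k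
    using that by (force simp: axis_def intro!: sum.neutral)
  have dL: "(L has_derivative L) (at 0)"
    unfolding L_def[abs_def] by (intro derivative_eq_intros) auto
  have dxm: "(xm has_derivative L) (at 0)"
    unfolding xm_def[abs_def] using dL by (intro derivative_eq_intros) auto
  have xm0: "xm 0 = z" by (simp add: xm_def L_def)
  have di: "((\<lambda>t. mpoly_eval (f i) (xm t)) has_derivative (\<lambda>h. g i \<bullet> L h)) (at 0)" for i
    using has_derivative_compose[OF dxm, of "mpoly_eval (f i)"] mpoly_deriv[of "f i" z] xm0
    by (simp add: g_def)
  have dF: "(F has_derivative D) (at 0)"
    unfolding F_def[abs_def] D_def[abs_def]
    by (intro has_derivative_add has_derivative_sum has_derivative_scaleR_left di dnth)
  have linD: "linear D" using dF by (rule has_derivative_linear)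
  have "inj D"
    unfolding linear_injective_0[OF linD]
  proof (intro allI impI)
    fix h assume Dh: "D h = 0"
    have a: "h$k = 0" if "k \<notin> \<phi>`S" for k
      using arg_cong[OF Dh, of "\<lambda>v. v$k"] that comp2 comp3 by (simp add: D_def)
    have b: "g i \<bullet> L h = 0" if "i\<in>S" for i
      using arg_cong[OF Dh, of "\<lambda>v. v$(\<phi> i)"] that comp1 comp4 by (simp add: D_def)
    have "L h \<bullet> L h = (\<Sum>j\<in>S. h$(\<phi> j) * (g j \<bullet> L h))"
      by (simp add: L_def[of h] inner_sum_left)
    also have "\<dots> = 0" using b by simp
    finally have "L h = 0" by simp
    then have c: "\<forall>j\<in>S. h$(\<phi> j) = 0" using indR[of "\<lambda>j. h$(\<phi> j)"] unfolding L_def by blast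
    show "h = 0"
      unfolding vec_eq_iff using a c by (metis imageE zero_index)
  qed
  then have "surj D" using linear_injective_imp_surjective[OF linD] by blast
  then obtain g' where g': "linear g'" "D \<circ> g' = id"
    using linear_surjective_right_inverse[OF linD] by blast
  have contxm: "continuous_on UNIV xm"
    unfolding xm_def[abs_def] L_def[abs_def] by (intro continuous_intros)
  have contF: "continuous_on UNIV F"
    unfolding F_def[abs_def] using contxm by (intro continuous_intros)
  define U where "U = (\<Inter>j\<in>{1..m}-S. {t. holds (\<sigma> j) (mpoly_eval (f j) (xm t))})"
  have "open U" unfolding U_def
  proof (rule open_INT, simp, intro ballI)
    fix j assume j: "j \<in> {1..m} - S"
    have cj: "continuous_on UNIV (\<lambda>t. mpoly_eval (f j) (xm t))" using contxm by (intro continuous_intros)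
    show "open {t. holds (\<sigma> j) (mpoly_eval (f j) (xm t))}"
    proof (cases "\<sigma> j")
      case SLt then show ?thesis using open_Collect_less[OF cj continuous_on_const] by simp
    next
      case SEq then have False using j by (auto simp add: S_def)
      then show ?thesis ..
    next
      case SGt then show ?thesis using open_Collect_less[OF continuous_on_const cj] by simp
    qed
  qed
  moreover have "0 \<in> U" using sz xm0 by (auto simp: U_def satisfies_def)
  ultimately have "F 0 \<in> interior (F ` U)"
    by (intro sussmann_open_mapping[OF open_UNIV contF _ dF _ g'(2)])
       (auto simp: linear_conv_bounded_linear[symmetric] g'(1) interior_open)
  moreover have "F 0 = 0" using z0 xm0 by (simp add: F_def)
  ultimately obtain e where e: "e > 0" "ball 0 e \<subseteq> F ` U" by (metis mem_interior)
  define s where "s i = (case \<tau> i of SLt \<Rightarrow> -1 | SEq \<Rightarrow> 0 | SGt \<Rightarrow> (1::real))" for i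
  define \<delta> where "\<delta> = e / (2 * (real (card S) + 1))"
  have dpos: "\<delta> > 0" using e by (simp add: \<delta>_def)
  define y where "y = (\<Sum>i\<in>S. (\<delta> * s i) *\<^sub>R axis (\<phi> i) (1::real))"
  have "norm y \<le> (\<Sum>i\<in>S. norm ((\<delta> * s i) *\<^sub>R axis (\<phi> i) (1::real)))"
    unfolding y_def by (rule norm_sum)
  also have "\<dots> \<le> (\<Sum>i\<in>S. \<delta>)"
    by (rule sum_mono) (use dpos in \<open>auto simp: s_def norm_axis_1 split: sign_rel.split\<close>)
  also have "\<dots> < e"
  proof -
    have c0: "0 \<le> e * real (card S)" using e by simp
    have c1: "0 < e * real (card S) + e * 2" using c0 e by linarith
    have pos: "0 < 2*(real(card S)+1)" by simp
    have "(\<Sum>i\<in>S. \<delta>) = (real (card S) * e) / (2*(real (card S)+1))" by (simp add: \<delta>_def)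
    also have "\<dots> < e" using pos e by (simp add: divide_less_eq algebra_simps c1)
    finally show ?thesis .
  qed
  finally have "y \<in> F ` U" using e by auto
  then obtain t where t: "t \<in> U" "F t = y" by blast
  have fS: "mpoly_eval (f i) (xm t) = \<delta> * s i" if "i \<in> S" for i
  proof -
    have "F t $ (\<phi> i) = mpoly_eval (f i) (xm t)"
      using that comp1 comp4 by (simp add: F_def)
    moreover have "y $ (\<phi> i) = \<delta> * s i" using that comp1 by (simp add: y_def)
    ultimately show ?thesis using t by simp
  qed
  have "satisfies m f \<tau> (xm t)"
    unfolding satisfies_def
  proof
    fix i assume i: "i \<in> {1..m}"
    show "holds (\<tau> i) (mpoly_eval (f i) (xm t))"
    proof (cases "i \<in> S")
      case True
      then show ?thesis using fS[OF True] dpos by (cases "\<tau> i") (auto simp: s_def)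
    next
      case False
      then have "\<sigma> i \<noteq> SEq" using i by (simp add: S_def)
      then have "\<tau> i = \<sigma> i" using tP i by (simp add: P_of_def)
      then show ?thesis using t(1) i False by (simp add: U_def)
    qed
  qed
  then show ?thesis by blast
qed


theorem mainTheorem12:
  fixes K :: "real set" and m :: nat and f :: "nat \<Rightarrow> 'n::finite mpoly"
    and M :: "(real ^ 'n) set"
  assumes "subfield_of_reals K"
    and "\<forall>i\<in>{1..m}. \<forall>\<alpha>. Poly_Mapping.lookup (f i) \<alpha> \<in> K"
    and "regular m f"
    and "finite M"
    and "\<forall>\<sigma>\<in>sign_conds m. feasible m f \<sigma> \<longrightarrow>
           (\<forall>C\<in>components (realization m f \<sigma>). M \<inter> closure C \<noteq> {})"
  shows "{\<sigma>\<in>sign_conds m. feasible m f \<sigma>} = (\<Union>\<sigma>\<in>L_of m f M. P_of m \<sigma>)"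
proof
  show "{\<sigma>\<in>sign_conds m. feasible m f \<sigma>} \<subseteq> (\<Union>\<sigma>\<in>L_of m f M. P_of m \<sigma>)"
    using sub_dir assms(5) by blast
next
  show "(\<Union>\<sigma>\<in>L_of m f M. P_of m \<sigma>) \<subseteq> {\<sigma>\<in>sign_conds m. feasible m f \<sigma>}"
  proof
    fix \<tau> assume "\<tau> \<in> (\<Union>\<sigma>\<in>L_of m f M. P_of m \<sigma>)"
    then obtain \<sigma> z where s: "\<tau> \<in> P_of m \<sigma>" "satisfies m f \<sigma> z"
      unfolding L_of_def by blast
    obtain x where "satisfies m f \<tau> x" using sup_dir[OF assms(3) s(2) s(1)] by blast
    then have "feasible m f \<tau>" by (auto simp: feasible_def realization_def)
    moreover have "\<tau> \<in> sign_conds m" using s(1) by (simp add: P_of_def)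
    ultimately show "\<tau> \<in> {\<sigma>\<in>sign_conds m. feasible m f \<sigma>}" by blast
  qed
qed

end
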